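(* In the two-period, two-sequence crossover design ($T=2$, $\mathcal{S}^{\mathrm{obs}}=\{AB,BA\}$, $N_{AB},N_{BA}\ge1$) under complete randomization, suppose Assumption 1 holds. Then the only unbiased linear estimator of $\tau_1$ is $\widehat Y_1(AB)-\widehat Y_1(BA)$, and for each $z\in\{A,B\}$ there is no unbiased linear estimator of $\tau_2(z)$ nor of $\tau_2^1(z)$.
   Context: Setup: $N$ units, treatments $A,B$, $T$ periods; sequences $\vec z\in\{A,B\}^T$, $\vec z_{[t_1,t_2]}=z_{t_1}\cdots z_{t_2}$. Complete randomization: fixed positive group sizes $N_{\vec z}$ for $\vec z\in\mathcal{S}^{\mathrm{obs}}$ summing to $N$, assignment uniform over assignments with these group sizes. Fixed potential outcomes $Y_{it}(\vec z)$ for all $\vec z\in\{A,B\}^T$ (including unimplemented sequences); observed $Y_{it}=Y_{it}(\vec Z_i)$; randomness only from assignment. $\bar Y_t(\vec z)=N^{-1}\sum_iY_{it}(\vec z)$, $\widehat Y_t(\vec z)=N_{\vec z}^{-1}\sum_iY_{it}\mathbf1(\vec Z_i=\vec z)$. Assumption 1 (no anticipation): $Y_{it}(\vec z)=Y_{it}(\vec z')$ whenever $\vec z_{[1,t]}=\vec z'_{[1,t]}$. Estimands: $\tau_1=\bar Y_1(A)-\bar Y_1(B)$, $\tau_2(z_1)=\bar Y_2(z_1A)-\bar Y_2(z_1B)$, $\tau_2^1(z_2)=\bar Y_2(Az_2)-\bar Y_2(Bz_2)$. A linear estimator is $\sum_{t=1}^2\sum_{\vec z\in\mathcal{S}^{\mathrm{obs}}}\tilde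 w_t(\vec z)\widehat Y_t(\vec z)$ with non-random real weights; it is unbiased for an estimand if its expectation equals the estimand for every finite population of potential outcomes satisfying the stated assumptions. *)

theory Defs
  imports Complex_Main "HOL-Library.FuncSet"
begin

text \<open>Two treatments and two periods; a treatment sequence is a pair (z1, z2).
  Units are 0..N-1, periods are 1 and 2.\<close>

datatype trt = A | B

type_synonym seq2 = "trt \<times> trt"

type_synonym pot_outcomes = "nat \<Rightarrow> nat \<Rightarrow> seq2 \<Rightarrow> real"

definition prefix_agree :: "nat \<Rightarrow> seq2 \<Rightarrow> seq2 \<Rightarrow> bool" where
  "prefix_agree t z z' \<longleftrightarrow> (1 \<le> t \<longrightarrow> fst z = fst z') \<and> (2 \<le> t \<longrightarrow> snd z = snd z')"

definition no_anticipation :: "pot_outcomes \<Rightarrow> bool" where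
  "no_anticipation Y \<longleftrightarrow>
     (\<forall>i t z z'. t \<in> {1,2} \<and> prefix_agree t z z' \<longrightarrow> Y i t z = Y i t z')"

definition assignments :: "nat \<Rightarrow> seq2 set \<Rightarrow> (seq2 \<Rightarrow> nat) \<Rightarrow> (nat \<Rightarrow> seq2) set" where
  "assignments N S Nz =
     {Z \<in> {..<N} \<rightarrow>\<^sub>E S. \<forall>z\<in>S. card {i\<in>{..<N}. Z i = z} = Nz z}"

definition expect_CR :: "nat \<Rightarrow> seq2 set \<Rightarrow> (seq2 \<Rightarrow> nat) \<Rightarrow> ((nat \<Rightarrow> seq2) \<Rightarrow> real) \<Rightarrow> real" where
  "expect_CR N S Nz f =
     (\<Sum>Z\<in>assignments N S Nz. f Z) / real (card (assignments N S Nz))"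

definition Ybar :: "nat \<Rightarrow> pot_outcomes \<Rightarrow> nat \<Rightarrow> seq2 \<Rightarrow> real" where
  "Ybar N Y t z = (\<Sum>i<N. Y i t z) / real N"

definition Yhat :: "nat \<Rightarrow> (seq2 \<Rightarrow> nat) \<Rightarrow> pot_outcomes \<Rightarrow> nat \<Rightarrow> seq2 \<Rightarrow> (nat \<Rightarrow> seq2) \<Rightarrow> real" where
  "Yhat N Nz Y t z Z = (\<Sum>i\<in>{i\<in>{..<N}. Z i = z}. Y i t (Z i)) / real (Nz z)"

definition lin_est :: "nat \<Rightarrow> seq2 set \<Rightarrow> (seq2 \<Rightarrow> nat) \<Rightarrow> (nat \<Rightarrow> seq2 \<Rightarrow> real)
                      \<Rightarrow> pot_outcomes \<Rightarrow> (nat \<Rightarrow> seq2) \<Rightarrow> real" where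
  "lin_est N S Nz w Y Z = (\<Sum>t\<in>{1,2}. \<Sum>z\<in>S. w t z * Yhat N Nz Y t z Z)"

definition unbiased :: "nat \<Rightarrow> seq2 set \<Rightarrow> (seq2 \<Rightarrow> nat) \<Rightarrow> (nat \<Rightarrow> seq2 \<Rightarrow> real)
                       \<Rightarrow> (pot_outcomes \<Rightarrow> real) \<Rightarrow> bool" where
  "unbiased N S Nz w \<theta> \<longleftrightarrow>
     (\<forall>Y. no_anticipation Y \<longrightarrow> expect_CR N S Nz (lin_est N S Nz w Y) = \<theta> Y)"

text \<open>Estimands. \<open>\<bar>Y\<close>_1(A) is represented by the period-1 mean under any sequence
  starting with A (well defined under Assumption 1); we use AB and BA.\<close>
definition tau1 :: "nat \<Rightarrow> pot_outcomes \<Rightarrow> real" where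
  "tau1 N Y = Ybar N Y 1 (A,B) - Ybar N Y 1 (B,A)"

definition tau2 :: "nat \<Rightarrow> trt \<Rightarrow> pot_outcomes \<Rightarrow> real" where
  "tau2 N z1 Y = Ybar N Y 2 (z1,A) - Ybar N Y 2 (z1,B)"

definition tau2_1 :: "nat \<Rightarrow> trt \<Rightarrow> pot_outcomes \<Rightarrow> real" where
  "tau2_1 N z2 Y = Ybar N Y 2 (A,z2) - Ybar N Y 2 (B,z2)"

end

theory Submission
  imports Defs
begin

lemma card_filter_sum: "finite F \<Longrightarrow> card {x\<in>F. P x} = (\<Sum>x\<in>F. if P x then 1 else (0::nat))"
  unfolding card_eq_sum by (rule sum.inter_filter)

lemma finite_assign: "finite S \<Longrightarrow> finite (assignments N S Nz)"
  unfolding assignments_def by (rule finite_subset[of _ "{..<N} \<rightarrow>\<^sub>E S"]) (auto intro: finite_PiE)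

definition sw :: "nat \<Rightarrow> nat \<Rightarrow> nat \<Rightarrow> nat" where
  "sw i j k = (if k = i then j else if k = j then i else k)"

lemma sw_inv[simp]: "sw i j (sw i j k) = k" unfolding sw_def by auto

lemma sw_assign:
  assumes "i < N" "j < N" "Z \<in> assignments N S Nz"
  shows "Z \<circ> sw i j \<in> assignments N S Nz"
proof -
  have bij: "bij_betw (sw i j) {k\<in>{..<N}. Z (sw i j k) = z} {k\<in>{..<N}. Z k = z}" for z
    by (rule bij_betw_byWitness[where f'="sw i j"]) (use assms in \<open>auto simp: sw_def\<close>)
  show ?thesis using assms bij_betw_same_card[OF bij]
    unfolding assignments_def by (auto simp: sw_def PiE_def extensional_def Pi_def)
qed

lemma count_sym:
  assumes "i < N" "j < N"
  shows "card {Z\<in>assignments N S Nz. Z i = z} = card {Z\<in>assignments N S Nz. Z j = z}"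
proof -
  have "bij_betw (\<lambda>Z. Z \<circ> sw i j) {Z\<in>assignments N S Nz. Z j = z} {Z\<in>assignments N S Nz. Z i = z}"
    by (rule bij_betw_byWitness[where f'="\<lambda>Z. Z \<circ> sw i j"])
       (use assms sw_assign in \<open>auto simp: sw_def o_def\<close>)
  thus ?thesis by (simp add: bij_betw_same_card)
qed

lemma double_count:
  assumes "finite S" "z \<in> S"
  shows "(\<Sum>i<N. card {Z\<in>assignments N S Nz. Z i = z}) = card (assignments N S Nz) * Nz z"
proof -
  have "(\<Sum>i<N. card {Z\<in>assignments N S Nz. Z i = z})
     = (\<Sum>i<N. \<Sum>Z\<in>assignments N S Nz. if Z i = z then 1 else 0)"
    using finite_assign[OF assms(1)] by (simp add: card_filter_sum)
  also have "\<dots> = (\<Sum>Z\<in>assignments N S Nz. \<Sum>i<N. if Z i = z then 1 else 0)"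
    by (rule sum.swap)
  also have "\<dots> = (\<Sum>Z\<in>assignments N S Nz. card {i\<in>{..<N}. Z i = z})"
    by (intro sum.cong refl) (rule card_filter_sum[symmetric], simp)
  also have "\<dots> = (\<Sum>Z\<in>assignments N S Nz. Nz z)"
    using assms(2) by (intro sum.cong) (auto simp: assignments_def)
  finally show ?thesis by simp
qed

lemma sum_lin_helper:
  "(\<Sum>t\<in>T. \<Sum>z\<in>S. \<Sum>Z\<in>As. w t z * f t z Z) / (c::real)
   = (\<Sum>t\<in>T. \<Sum>z\<in>S. w t z * ((\<Sum>Z\<in>As. f t z Z) / c))"
  by (simp add: sum_divide_distrib sum_distrib_left)

lemma E_Yhat:
  assumes "finite S" "z \<in> S" "N > 0" "Nz z > 0" "assignments N S Nz \<noteq> {}"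
  shows "expect_CR N S Nz (Yhat N Nz Y t z) = Ybar N Y t z"
proof -
  let ?As = "assignments N S Nz"
  define c where "c = card {Z\<in>?As. Z 0 = z}"
  have ci: "card {Z\<in>?As. Z i = z} = c" if "i < N" for i
    unfolding c_def using count_sym[OF that assms(3)] .
  have "(\<Sum>i<N. card {Z\<in>?As. Z i = z}) = N * c" using ci by simp
  hence cN: "real N * real c = real (card ?As) * real (Nz z)"
    using double_count[OF assms(1,2), of N Nz] by (metis of_nat_mult)
  have fin: "finite ?As" using finite_assign[OF assms(1)] .
  have cardpos: "card ?As > 0" using fin assms(5) by (simp add: card_gt_0_iff)
  have "(\<Sum>Z\<in>?As. Yhat N Nz Y t z Z)
      = (\<Sum>Z\<in>?As. \<Sum>i<N. if Z i = z then Y i t z else 0) / real (Nz z)"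
  proof -
    have "(\<Sum>i\<in>{i\<in>{..<N}. Z i = z}. Y i t (Z i)) = (\<Sum>i<N. if Z i = z then Y i t z else 0)" for Z
    proof -
      have "(\<Sum>i\<in>{i\<in>{..<N}. Z i = z}. Y i t (Z i)) = (\<Sum>i\<in>{i\<in>{..<N}. Z i = z}. Y i t z)"
        by (intro sum.cong) auto
      also have "\<dots> = (\<Sum>i<N. if Z i = z then Y i t z else 0)"
        by (rule sum.inter_filter) simp
      finally show ?thesis .
    qed
    thus ?thesis unfolding Yhat_def by (simp add: sum_divide_distrib[symmetric])
  qed
  also have "(\<Sum>Z\<in>?As. \<Sum>i<N. if Z i = z then Y i t z else 0)
      = (\<Sum>i<N. \<Sum>Z\<in>?As. if Z i = z then Y i t z else 0)" by (rule sum.swap)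
  also have "\<dots> = (\<Sum>i<N. Y i t z * real (card {Z\<in>?As. Z i = z}))"
    using fin by (intro sum.cong refl) (simp add: sum.If_cases[of _ _ "\<lambda>_. Y _ t z"] Int_def conj_commute)
  also have "\<dots> = (\<Sum>i<N. Y i t z) * real c"
    by (simp add: ci sum_distrib_right)
  finally have eq: "(\<Sum>Z\<in>?As. Yhat N Nz Y t z Z) = (\<Sum>i<N. Y i t z) * real c / real (Nz z)" .
  have "real c = real (card ?As) * real (Nz z) / real N" using cN assms(3)
    by (simp add: field_simps)
  thus ?thesis unfolding expect_CR_def Ybar_def eq using assms(3,4) cardpos
    by (simp add: field_simps)
qed


theorem proposition4:
  fixes nAB nBA :: nat
  assumes "nAB \<ge> 1" and "nBA \<ge> 1"
  defines "N \<equiv> nAB + nBA"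
    and "S \<equiv> {(A,B), (B,A)}"
    and "Nz \<equiv> (\<lambda>z. if z = (A,B) then nAB else if z = (B,A) then nBA else 0)"
  shows "(\<forall>w. unbiased N S Nz w (tau1 N) \<longleftrightarrow>
              (w 1 (A,B) = 1 \<and> w 1 (B,A) = -1 \<and> w 2 (A,B) = 0 \<and> w 2 (B,A) = 0))
         \<and> (\<forall>z. \<not> (\<exists>w. unbiased N S Nz w (tau2 N z)) \<and> \<not> (\<exists>w. unbiased N S Nz w (tau2_1 N z)))"
proof -
  have fS: "finite S" unfolding S_def by simp
  have Npos: "N > 0" using assms(1) unfolding N_def by simp
  have NzAB: "Nz (A,B) = nAB" and NzBA: "Nz (B,A) = nBA" unfolding Nz_def by auto
  define Z0 where "Z0 = (\<lambda>i. if i < nAB then (A,B) else if i < N then (B,A) else undefined)"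
  have s1: "{i\<in>{..<N}. Z0 i = (A,B)} = {..<nAB}" unfolding Z0_def N_def by auto
  have s2: "{i\<in>{..<N}. Z0 i = (B,A)} = {nAB..<N}" unfolding Z0_def N_def by auto
  have "Z0 \<in> assignments N S Nz"
    unfolding assignments_def using s1 s2
    by (auto simp: Z0_def S_def N_def NzAB NzBA PiE_def extensional_def)
  hence ne: "assignments N S Nz \<noteq> {}" by auto
  have EY: "expect_CR N S Nz (Yhat N Nz Y t z) = Ybar N Y t z" if "z \<in> S" for Y t z
    using E_Yhat[OF fS that Npos _ ne] that assms(1,2) unfolding S_def Nz_def by auto
  have EL: "expect_CR N S Nz (lin_est N S Nz w Y) = (\<Sum>t\<in>{1,2}. \<Sum>z\<in>S. w t z * Ybar N Y t z)" for w Y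
  proof -
    have "expect_CR N S Nz (lin_est N S Nz w Y) = (\<Sum>t\<in>{1::nat,2}. \<Sum>z\<in>S. w t z * expect_CR N S Nz (Yhat N Nz Y t z))"
    proof -
      let ?As = "assignments N S Nz" and ?c = "real (card (assignments N S Nz))"
      have "(\<Sum>Z\<in>?As. \<Sum>t\<in>{1::nat,2}. \<Sum>z\<in>S. w t z * Yhat N Nz Y t z Z)
          = (\<Sum>t\<in>{1::nat,2}. \<Sum>Z\<in>?As. \<Sum>z\<in>S. w t z * Yhat N Nz Y t z Z)" by (rule sum.swap)
      also have "\<dots> = (\<Sum>t\<in>{1::nat,2}. \<Sum>z\<in>S. \<Sum>Z\<in>?As. w t z * Yhat N Nz Y t z Z)"
        by (intro sum.cong refl sum.swap)
      finally have "(\<Sum>Z\<in>?As. \<Sum>t\<in>{1::nat,2}. \<Sum>z\<in>S. w t z * Yhat N Nz Y t z Z) / ?c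
          = (\<Sum>t\<in>{1::nat,2}. \<Sum>z\<in>S. w t z * ((\<Sum>Z\<in>?As. Yhat N Nz Y t z Z) / ?c))"
        by (simp only: sum_lin_helper)
      thus ?thesis unfolding expect_CR_def lin_est_def .
    qed
    also have "\<dots> = (\<Sum>t\<in>{1,2}. \<Sum>z\<in>S. w t z * Ybar N Y t z)"
      using EY by simp
    finally show ?thesis .
  qed
  have EL': "expect_CR N S Nz (lin_est N S Nz w Y) = w 1 (A,B) * Ybar N Y 1 (A,B) + w 1 (B,A) * Ybar N Y 1 (B,A)
      + (w 2 (A,B) * Ybar N Y 2 (A,B) + w 2 (B,A) * Ybar N Y 2 (B,A))" for w Y
    by (subst EL) (simp add: S_def)
  define Yi :: "nat \<Rightarrow> (seq2 \<Rightarrow> bool) \<Rightarrow> pot_outcomes" where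
    "Yi = (\<lambda>t0 P i t z. if t = t0 \<and> P z then 1 else 0)"
  have Ybar_Yi: "Ybar N (Yi t0 P) t z = (if t = t0 \<and> P z then 1 else 0)" for t0 P t z
    unfolding Ybar_def Yi_def using Npos by auto
  have na1: "no_anticipation (Yi 1 (\<lambda>z. fst z = a))" for a
    unfolding no_anticipation_def Yi_def prefix_agree_def by auto
  have na2: "no_anticipation (Yi 2 (\<lambda>z. z = c))" for c
    unfolding no_anticipation_def Yi_def prefix_agree_def by (auto simp: prod_eq_iff)
  have part1: "unbiased N S Nz w (tau1 N) \<longleftrightarrow>
              (w 1 (A,B) = 1 \<and> w 1 (B,A) = -1 \<and> w 2 (A,B) = 0 \<and> w 2 (B,A) = 0)" for w
  proof
    assume u: "unbiased N S Nz w (tau1 N)"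
    have "w 1 (A,B) = 1" using u[unfolded unbiased_def, rule_format, OF na1[of A]] unfolding tau1_def EL' Ybar_Yi
      by simp
    moreover have "w 1 (B,A) = -1" using u[unfolded unbiased_def, rule_format, OF na1[of B]] unfolding tau1_def EL' Ybar_Yi
      by simp
    moreover have "w 2 (A,B) = 0" using u[unfolded unbiased_def, rule_format, OF na2[of "(A,B)"]] unfolding tau1_def EL' Ybar_Yi
      by simp
    moreover have "w 2 (B,A) = 0" using u[unfolded unbiased_def, rule_format, OF na2[of "(B,A)"]] unfolding tau1_def EL' Ybar_Yi
      by simp
    ultimately show "w 1 (A,B) = 1 \<and> w 1 (B,A) = -1 \<and> w 2 (A,B) = 0 \<and> w 2 (B,A) = 0" by blast
  next
    assume "w 1 (A,B) = 1 \<and> w 1 (B,A) = -1 \<and> w 2 (A,B) = 0 \<and> w 2 (B,A) = 0"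
    thus "unbiased N S Nz w (tau1 N)" unfolding unbiased_def tau1_def EL' by simp
  qed
  have part2: "\<not> (\<exists>w. unbiased N S Nz w (tau2 N z)) \<and> \<not> (\<exists>w. unbiased N S Nz w (tau2_1 N z))" for z
  proof (cases z)
    case A
    show ?thesis
      proof -
        have h: "expect_CR N S Nz (lin_est N S Nz w (Yi 2 (\<lambda>z. z = (A,A)))) = 0" for w
          unfolding EL' Ybar_Yi by simp
        have h2: "tau2 N A (Yi 2 (\<lambda>z. z = (A,A))) \<noteq> 0" "tau2_1 N A (Yi 2 (\<lambda>z. z = (A,A))) \<noteq> 0"
          unfolding tau2_def tau2_1_def Ybar_Yi by simp_all
        show ?thesis unfolding unbiased_def A using na2[of "(A,A)"] h h2 by metis
      qed
  next
    case B
    show ?thesis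
      proof -
        have h: "expect_CR N S Nz (lin_est N S Nz w (Yi 2 (\<lambda>z. z = (B,B)))) = 0" for w
          unfolding EL' Ybar_Yi by simp
        have h2: "tau2 N B (Yi 2 (\<lambda>z. z = (B,B))) \<noteq> 0" "tau2_1 N B (Yi 2 (\<lambda>z. z = (B,B))) \<noteq> 0"
          unfolding tau2_def tau2_1_def Ybar_Yi by simp_all
        show ?thesis unfolding unbiased_def B using na2[of "(B,B)"] h h2 by metis
      qed
  qed
  show ?thesis using part1 part2 by blast
qed

end
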